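(* Consider the 4-state Jukes–Cantor coalescent mixture (CK) model on the rooted 3-taxon species tree $((a:\ell_a,b:\ell_b):\ell_{ab},\,c:\ell_c)$ with non-negative edge lengths. If $\ell_a=\ell_{ab}+\ell_c$, then the resulting probability tensor $P=(p_{ijk})$ (indices ordered $a,b,c$) is invariant under exchanging the $a$ and $c$ indices: $p_{ijk}=p_{kji}$ for all $i,j,k$.
   Context: The CK Jukes–Cantor model on a rooted species tree with edge lengths (not necessarily ultrametric): with a constant population size, a gene tree with one lineage sampled per taxon is drawn under the multispecies coalescent (lineages coalesce only within populations, i.e., edges of the species tree including the infinite root population), and a site evolves on the gene tree by the 4-state Jukes–Cantor process (rate matrix with all off-diagonal entries equal, uniform stationary distribution) started from the uniform distribution at the gene tree root, with edge lengths converted by a fixed scalar mutation rate. The site pattern probability tensor is the mixture over gene trees. The notation $(a:\ell_a,b:\ell_b):\ell_{ab}$ means the cherry $\{a,b\}$ with pendant edge lengths $\ell_a,\ell_b$ joined by an edge of length $\ell_{ab}$ to the root, and $c:\ell_c$ is a pendant edge of length $\ell_c$ from the root. *)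

theory Defs
  imports "HOL-Analysis.Analysis"
begin

text \<open>Nucleotide states are encoded as the naturals 0,1,2,3.
  Jukes--Cantor transition probability after a gene-tree branch of length t
  (coalescent units), with rate matrix Q having all off-diagonal entries q,
  and mutation rate mu converting branch lengths: P(t) = exp(Q * mu * t).\<close>
definition jc :: "real \<Rightarrow> real \<Rightarrow> real \<Rightarrow> nat \<Rightarrow> nat \<Rightarrow> real" where
  "jc q mu t i j =
     (if i = j then 1/4 + 3/4 * exp (- 4 * q * mu * t)
               else 1/4 - 1/4 * exp (- 4 * q * mu * t))"

text \<open>Site pattern probability on the rooted gene tree ((x:u1, y:u2):u3, z:u4),
  uniform root distribution; returns probability of states (i,j,k) at leaves (x,y,z).\<close>
definition tree3 :: "real \<Rightarrow> real \<Rightarrow> real \<Rightarrow> real \<Rightarrow> real \<Rightarrow> real \<Rightarrow>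
    nat \<Rightarrow> nat \<Rightarrow> nat \<Rightarrow> real" where
  "tree3 q mu u1 u2 u3 u4 i j k =
     (\<Sum>r<4. \<Sum>s<4. (1/4) * jc q mu u3 r s * jc q mu u1 s i * jc q mu u2 s j
                        * jc q mu u4 r k)"

text \<open>Mixture over gene trees under the multispecies
  coalescent (coalescence rate 1 per pair of lineages):
  (1) a,b coalesce in the ab population at time t in [0,lab] (density e^{-t}),
      then coalesce with c in the root population after time s (density e^{-s});
  (2) no coalescence in the ab population (probability e^{-lab}); in the root
      population the first coalescence is after time s1 (density 3e^{-3 s1}),
      each of the three pairs with probability 1/3, the second after a further
      time s2 (density e^{-s2}).\<close>
definition ck :: "real \<Rightarrow> real \<Rightarrow> real \<Rightarrow> real \<Rightarrow> real \<Rightarrow> real \<Rightarrow>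
    nat \<Rightarrow> nat \<Rightarrow> nat \<Rightarrow> real" where
  "ck q mu la lb lab lc i j k =
     (LINT t:{0..lab}|lborel. LINT s:{0..}|lborel.
        exp (- t) * exp (- s) *
        tree3 q mu (la + t) (lb + t) (lab - t + s) (lc + s) i j k)
   + exp (- lab) *
     (LINT s1:{0..}|lborel. LINT s2:{0..}|lborel.
        exp (- 3 * s1) * exp (- s2) *
        (  tree3 q mu (la + lab + s1) (lb + lab + s1) s2 (lc + s1 + s2) i j k
         + tree3 q mu (la + lab + s1) (lc + s1) s2 (lb + lab + s1 + s2) i k j
         + tree3 q mu (lb + lab + s1) (lc + s1) s2 (la + lab + s1 + s2) j k i))"

end

theory Submission
  imports Defs "HOL-Probability.Distributions"
begin


definition HB :: "real set \<Rightarrow> (real \<Rightarrow> real) \<Rightarrow> real \<Rightarrow> bool" where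
  "HB A f v \<longleftrightarrow> has_bochner_integral lborel (\<lambda>x. indicator A x *\<^sub>R f x) v"

lemma HB_LINT: "HB A f v \<Longrightarrow> (LINT x:A|lborel. f x) = v"
  unfolding HB_def set_lebesgue_integral_def by (rule has_bochner_integral_integral_eq)

lemma HB_add: "HB A f v \<Longrightarrow> HB A g w \<Longrightarrow> HB A (\<lambda>x. f x + g x) (v + w)"
  unfolding HB_def by (drule (1) has_bochner_integral_add) (simp add: distrib_left)

lemma HB_cmult: "HB A f v \<Longrightarrow> HB A (\<lambda>x. c * f x) (c * v)"
proof -
  assume h: "HB A f v"
  have "has_bochner_integral lborel (\<lambda>x. c * (indicator A x *\<^sub>R f x)) (c * v)"
    by (rule has_bochner_integral_mult_right) (use h in \<open>simp add: HB_def\<close>)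
  then show ?thesis unfolding HB_def by (simp add: mult.left_commute)
qed

lemma HB_cong: "(\<And>x. f x = g x) \<Longrightarrow> HB A g v \<Longrightarrow> v = w \<Longrightarrow> HB A f w"
  proof -
    assume "\<And>x. f x = g x" "HB A g v" "v = w"
    then show ?thesis by (metis ext)
  qed

lemma HB_exp_inf:
  fixes c :: real assumes c: "c > 0"
  shows "HB {0..} (\<lambda>s. exp (- (c * s))) (1 / c)"
proof -
  have "has_bochner_integral lborel (erlang_density 0 c) 1"
    apply (rule has_bochner_integral_nn_integral)
    using nn_integral_erlang_ith_moment[OF c, where k=0 and i=0] c by auto
  then have "has_bochner_integral lborel (\<lambda>x. (1/c) * erlang_density 0 c x) ((1/c) * 1)"
    by (intro has_bochner_integral_mult_right)
  from this
  show ?thesis unfolding HB_def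
    by (rule has_bochner_integral_cong[THEN iffD1, rotated 3])
       (use c in \<open>auto simp: erlang_density_def indicator_def\<close>)
qed

lemma HB_exp_fin:
  fixes c L :: real assumes c: "c > 0" and L: "L \<ge> 0"
  shows "HB {0..L} (\<lambda>s. exp (- (c * s))) ((1 - exp (- (c * L))) / c)"
proof -
  have cont: "continuous_on {0..L} (\<lambda>s. exp (- (c * s)))"
    by (intro continuous_intros)
  have "integral\<^sup>L lborel (\<lambda>x. indicator {0..L} x *\<^sub>R exp (- (c * x))) =
        (- exp (- (c * L)) / c) - (- exp (- (c * 0)) / c)"
    apply (rule integral_FTC_atLeastAtMost[OF L _ cont])
    apply (rule has_real_derivative_iff_has_vector_derivative[THEN iffD1])
    using c by (auto intro!: derivative_eq_intros)
  moreover have "set_integrable lborel {0..L} (\<lambda>s. exp (- (c * s)))"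
    by (rule borel_integrable_atLeastAtMost'[OF cont])
  ultimately show ?thesis unfolding HB_def has_bochner_integral_iff set_integrable_def
    using c by (simp add: field_simps)
qed

definition EE :: "real \<Rightarrow> real \<Rightarrow> real" where "EE x t = exp (- (x * t))"

lemma EE_add: "EE x (a + b) = EE x a * EE x b"
  unfolding EE_def by (simp add: distrib_left exp_add[symmetric])
lemma EE_diff: "EE x (a - b) = EE x a / EE x b"
  unfolding EE_def by (simp add: right_diff_distrib exp_diff[symmetric])
lemma EE_pos: "EE x a > 0" unfolding EE_def by simp

lemma pow_exp: "exp (- s) ^ m * EE x s ^ n = exp (- ((real m + real n * x) * s))"
proof -
  have "exp (- s) ^ m = exp (real m * (- s))" by (rule exp_of_nat_mult[symmetric])
  moreover have "EE x s ^ n = exp (real n * (- (x * s)))" unfolding EE_def by (rule exp_of_nat_mult[symmetric])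
  ultimately show ?thesis by (simp add: exp_add[symmetric] algebra_simps)
qed

lemma HB_pow_inf:
  assumes "real m + real n * x > 0"
  shows "HB {0..} (\<lambda>s. exp (- s) ^ m * EE x s ^ n) (1 / (real m + real n * x))"
  by (rule HB_cong[OF pow_exp HB_exp_inf[OF assms] refl])

lemma HB_pow_fin:
  assumes "real m + real n * x > 0" "L \<ge> 0"
  shows "HB {0..L} (\<lambda>s. exp (- s) ^ m * EE x s ^ n)
           ((1 - exp (- L) ^ m * EE x L ^ n) / (real m + real n * x))"
  by (rule HB_cong[OF pow_exp HB_exp_fin[OF assms]]) (simp add: pow_exp)

definition gg :: "nat \<Rightarrow> nat \<Rightarrow> real" where "gg i j = (if i = j then 3/4 else -1/4)"
definition G3 :: "nat \<Rightarrow> nat \<Rightarrow> nat \<Rightarrow> real" where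
  "G3 i j k = (\<Sum>s<4. gg s i * gg s j * gg s k)"
definition T :: "real \<Rightarrow> real \<Rightarrow> real \<Rightarrow> real \<Rightarrow> real \<Rightarrow> real \<Rightarrow> real \<Rightarrow> real \<Rightarrow> real" where
  "T A B C D e1 e2 e3 e4 = 1/64 + 1/16*(A*e1*e2 + B*e1*e3*e4 + C*e2*e3*e4) + 1/4*D*e1*e2*e3*e4"

lemma gg_sym: "gg i j = gg j i" unfolding gg_def by auto
lemma G3_sym1: "G3 i j k = G3 k j i" unfolding G3_def by (simp add: ac_simps)
lemma G3_sym2: "G3 i k j = G3 i j k" unfolding G3_def by (simp add: ac_simps)
lemma G3_sym3: "G3 j k i = G3 i j k" unfolding G3_def by (simp add: ac_simps)

lemma jc_Ex: "jc q mu t i j = 1/4 + gg i j * EE (4*q*mu) t"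
  unfolding jc_def gg_def EE_def by simp

lemma inner_r_all: "\<forall>s\<in>{0,1,2,3::nat}. \<forall>k\<in>{0,1,2,3::nat}. (\<Sum>r<4. (1/4 + gg r s * e3) * (1/4 + gg r k * e4)) = 1/4 + gg s k * e3 * e4"
  unfolding gg_def by (simp add: eval_nat_numeral lessThan_Suc field_simps)

lemma outer_s_all: "\<forall>i\<in>{0,1,2,3::nat}. \<forall>j\<in>{0,1,2,3::nat}. \<forall>k\<in>{0,1,2,3::nat}. (\<Sum>s<4. (1/4) * (1/4 + gg s i * e1) * (1/4 + gg s j * e2) * (1/4 + gg s k * e))
     = 1/64 + 1/16*(gg i j*e1*e2 + gg i k*e1*e + gg j k*e2*e) + 1/4*(\<Sum>s<4. gg s i * gg s j * gg s k)*e1*e2*e"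
  unfolding gg_def by (simp add: eval_nat_numeral lessThan_Suc field_simps)

lemma four: "(i::nat) < 4 \<Longrightarrow> i \<in> {0,1,2,3}" by auto

lemma inner_r:
  fixes e3 e4 :: real
  assumes "s < 4" "k < 4"
  shows "(\<Sum>r<4. (1/4 + gg r s * e3) * (1/4 + gg r k * e4)) = 1/4 + gg s k * e3 * e4"
  using inner_r_all four[OF assms(1)] four[OF assms(2)] by blast

lemma outer_s:
  fixes e1 e2 e :: real
  assumes "i < 4" "j < 4" "k < 4"
  shows "(\<Sum>s<4. (1/4) * (1/4 + gg s i * e1) * (1/4 + gg s j * e2) * (1/4 + gg s k * e))
     = 1/64 + 1/16*(gg i j*e1*e2 + gg i k*e1*e + gg j k*e2*e) + 1/4*G3 i j k*e1*e2*e"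
  unfolding G3_def using outer_s_all four[OF assms(1)] four[OF assms(2)] four[OF assms(3)] by blast

lemma T_poly:
  fixes e1 e2 e3 e4 :: real
  assumes "i < 4" "j < 4" "k < 4"
  shows "(\<Sum>r<4. \<Sum>s<4. (1/4) * (1/4 + gg r s * e3) * (1/4 + gg s i * e1) * (1/4 + gg s j * e2)
                        * (1/4 + gg r k * e4)) = T (gg i j) (gg i k) (gg j k) (G3 i j k) e1 e2 e3 e4"
proof -
  have "(\<Sum>r<4. \<Sum>s<4. (1/4) * (1/4 + gg r s * e3) * (1/4 + gg s i * e1) * (1/4 + gg s j * e2)
                        * (1/4 + gg r k * e4))
      = (\<Sum>s<4. \<Sum>r<4. ((1/4) * (1/4 + gg s i * e1) * (1/4 + gg s j * e2)) *
             ((1/4 + gg r s * e3) * (1/4 + gg r k * e4)))"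
    by (subst sum.swap) (simp add: ac_simps)
  also have "\<dots> = (\<Sum>s<4. ((1/4) * (1/4 + gg s i * e1) * (1/4 + gg s j * e2)) * (1/4 + gg s k * (e3 * e4)))"
  proof (intro sum.cong refl)
    fix s assume "s \<in> {..<4::nat}"
    hence s: "s < 4" by simp
    have "(\<Sum>r<4. ((1/4) * (1/4 + gg s i * e1) * (1/4 + gg s j * e2)) *
             ((1/4 + gg r s * e3) * (1/4 + gg r k * e4))) =
          ((1/4) * (1/4 + gg s i * e1) * (1/4 + gg s j * e2)) *
             (\<Sum>r<4. (1/4 + gg r s * e3) * (1/4 + gg r k * e4))"
      by (simp add: sum_distrib_left)
    also have "\<dots> = ((1/4) * (1/4 + gg s i * e1) * (1/4 + gg s j * e2)) * (1/4 + gg s k * (e3 * e4))"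
      by (simp add: inner_r[OF s assms(3)] mult.assoc)
    finally show "(\<Sum>r<4. ((1/4) * (1/4 + gg s i * e1) * (1/4 + gg s j * e2)) *
             ((1/4 + gg r s * e3) * (1/4 + gg r k * e4))) =
          ((1/4) * (1/4 + gg s i * e1) * (1/4 + gg s j * e2)) * (1/4 + gg s k * (e3 * e4))" .
  qed
  also have "\<dots> = T (gg i j) (gg i k) (gg j k) (G3 i j k) e1 e2 e3 e4"
    using outer_s[OF assms, of e1 e2 "e3*e4"] unfolding T_def by (simp add: ac_simps)
  finally show ?thesis .
qed

lemma tree3_T:
  assumes "i < 4" "j < 4" "k < 4"
  shows "tree3 q mu u1 u2 u3 u4 i j k = T (gg i j) (gg i k) (gg j k) (G3 i j k)
     (EE (4*q*mu) u1) (EE (4*q*mu) u2) (EE (4*q*mu) u3) (EE (4*q*mu) u4)"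
  unfolding tree3_def jc_Ex using T_poly[OF assms] by (simp add: mult.assoc)

lemma EE_nz: "EE x a \<noteq> 0" using EE_pos[of x a] by simp


lemma I1:
  fixes x :: real assumes x: "x > 0" and L: "lab \<ge> 0"
  shows "(LINT t:{0..lab}|lborel. LINT s:{0..}|lborel. exp (- t) * exp (- s) *
           T A B C D (EE x (la + t)) (EE x (lb + t)) (EE x (lab - t + s)) (EE x (lc + s)))
    = 1/64*(1 - exp (- lab)) + 1/16*A*EE x la*EE x lb*((1 - exp (- lab)*EE x lab^2)/(1+2*x))
      + 1/16*(B*EE x la+C*EE x lb)*EE x lab*EE x lc/(1+2*x)*(1 - exp (- lab))
      + 1/4*D*EE x la*EE x lb*EE x lab*EE x lc/(1+2*x)*((1 - exp (- lab)*EE x lab)/(1+x))"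
proof -
  define a b c l where "a = EE x la" "b = EE x lb" "c = EE x lc" "l = EE x lab"
  have p1: "real 1 + real 0 * x > 0" "real 1 + real 2 * x > 0" "real 1 + real 1 * x > 0" using x by auto
  have inner: "(LINT s:{0..}|lborel. exp (- t) * exp (- s) *
           T A B C D (EE x (la + t)) (EE x (lb + t)) (EE x (lab - t + s)) (EE x (lc + s)))
     = (exp (- t) * (1/64 + 1/16*A*a*b*EE x t^2)) * (1 / (real 1 + real 0 * x))
       + (exp (- t) * (1/16*(B*a+C*b)*l*c + 1/4*D*a*b*l*c*EE x t)) * (1 / (real 1 + real 2 * x))" for t
  proof (rule HB_LINT, rule HB_cong)
    fix s
    show "exp (- t) * exp (- s) *
           T A B C D (EE x (la + t)) (EE x (lb + t)) (EE x (lab - t + s)) (EE x (lc + s))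
         = (exp (- t) * (1/64 + 1/16*A*a*b*EE x t^2)) * (exp (- s) ^ 1 * EE x s ^ 0)
           + (exp (- t) * (1/16*(B*a+C*b)*l*c + 1/4*D*a*b*l*c*EE x t)) * (exp (- s) ^ 1 * EE x s ^ 2)"
      unfolding T_def EE_add EE_diff a_b_c_l_def using EE_nz[of x t]
      by (simp add: field_simps power2_eq_square)
  next
    show "HB {0..} (\<lambda>s. (exp (- t) * (1/64 + 1/16*A*a*b*EE x t^2)) * (exp (- s) ^ 1 * EE x s ^ 0)
           + (exp (- t) * (1/16*(B*a+C*b)*l*c + 1/4*D*a*b*l*c*EE x t)) * (exp (- s) ^ 1 * EE x s ^ 2))
        ((exp (- t) * (1/64 + 1/16*A*a*b*EE x t^2)) * (1 / (real 1 + real 0 * x))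
       + (exp (- t) * (1/16*(B*a+C*b)*l*c + 1/4*D*a*b*l*c*EE x t)) * (1 / (real 1 + real 2 * x)))"
      by (intro HB_add HB_cmult HB_pow_inf p1)
  qed simp
  have outer: "HB {0..lab} (\<lambda>t. (exp (- t) * (1/64 + 1/16*A*a*b*EE x t^2)) * (1 / (real 1 + real 0 * x))
       + (exp (- t) * (1/16*(B*a+C*b)*l*c + 1/4*D*a*b*l*c*EE x t)) * (1 / (real 1 + real 2 * x)))
     (1/64*((1 - exp (- lab)^1*EE x lab^0)/(real 1 + real 0 * x))
      + 1/16*A*a*b*((1 - exp (- lab)^1*EE x lab^2)/(real 1 + real 2 * x))
      + (1/16*(B*a+C*b)*l*c/(1+2*x))*((1 - exp (- lab)^1*EE x lab^0)/(real 1 + real 0 * x))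
      + (1/4*D*a*b*l*c/(1+2*x))*((1 - exp (- lab)^1*EE x lab^1)/(real 1 + real 1 * x)))"
  proof (rule HB_cong)
    fix t
    show "(exp (- t) * (1/64 + 1/16*A*a*b*EE x t^2)) * (1 / (real 1 + real 0 * x))
       + (exp (- t) * (1/16*(B*a+C*b)*l*c + 1/4*D*a*b*l*c*EE x t)) * (1 / (real 1 + real 2 * x))
      = 1/64*(exp (- t)^1*EE x t^0) + 1/16*A*a*b*(exp (- t)^1*EE x t^2)
        + (1/16*(B*a+C*b)*l*c/(1+2*x))*(exp (- t)^1*EE x t^0)
        + (1/4*D*a*b*l*c/(1+2*x))*(exp (- t)^1*EE x t^1)"
    proof -
      define K where "K = 1/(1+2*x)"
      have e: "1 / (real 1 + real 2 * x) = K" "\<And>P. P/(1+2*x) = P*K" by (auto simp: K_def)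
      show ?thesis unfolding e by (simp add: algebra_simps)
    qed
  next
    show "HB {0..lab} (\<lambda>t. 1/64*(exp (- t)^1*EE x t^0) + 1/16*A*a*b*(exp (- t)^1*EE x t^2)
        + (1/16*(B*a+C*b)*l*c/(1+2*x))*(exp (- t)^1*EE x t^0)
        + (1/4*D*a*b*l*c/(1+2*x))*(exp (- t)^1*EE x t^1))
     (1/64*((1 - exp (- lab)^1*EE x lab^0)/(real 1 + real 0 * x))
      + 1/16*A*a*b*((1 - exp (- lab)^1*EE x lab^2)/(real 1 + real 2 * x))
      + (1/16*(B*a+C*b)*l*c/(1+2*x))*((1 - exp (- lab)^1*EE x lab^0)/(real 1 + real 0 * x))
      + (1/4*D*a*b*l*c/(1+2*x))*((1 - exp (- lab)^1*EE x lab^1)/(real 1 + real 1 * x)))"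
      by (intro HB_add HB_cmult HB_pow_fin p1 L)
  qed simp
  show ?thesis
    unfolding inner[unfolded a_b_c_l_def] using HB_LINT[OF outer[unfolded a_b_c_l_def]]
    by (simp add: a_b_c_l_def)
qed



lemma exp3: "exp (- 3 * (s::real)) = exp (- s) ^ 3"
proof -
  have "exp (- 3 * s) = exp (real 3 * (- s))" by simp
  then show ?thesis by (simp only: exp_of_nat_mult)
qed

lemma I2:
  fixes x :: real assumes x: "x > 0"
  shows "(LINT s1:{0..}|lborel. LINT s2:{0..}|lborel. exp (- 3 * s1) * exp (- s2) *
      (T A B C D (EE x (la + lab + s1)) (EE x (lb + lab + s1)) (EE x s2) (EE x (lc + s1 + s2))
     + T B A C D (EE x (la + lab + s1)) (EE x (lc + s1)) (EE x s2) (EE x (lb + lab + s1 + s2))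
     + T C A B D (EE x (lb + lab + s1)) (EE x (lc + s1)) (EE x s2) (EE x (la + lab + s1 + s2))))
    = 1/64 + (1/16*(A*EE x la*EE x lb*EE x lab^2 + B*EE x la*EE x lc*EE x lab + C*EE x lb*EE x lc*EE x lab)
              + 1/8*(A*EE x la*EE x lb*EE x lab^2 + B*EE x la*EE x lc*EE x lab + C*EE x lb*EE x lc*EE x lab)/(1+2*x))/(3+2*x)
      + 3/4*D*EE x la*EE x lb*EE x lc*EE x lab^2/(1+2*x)/(3+3*x)"
proof -
  define a b c l where "a = EE x la" "b = EE x lb" "c = EE x lc" "l = EE x lab"
  define S where "S = A*a*b*l^2 + B*a*c*l + C*b*c*l"
  have p1: "real 1 + real 0 * x > 0" "real 1 + real 2 * x > 0" "real 3 + real 0 * x > 0"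
     "real 3 + real 2 * x > 0" "real 3 + real 3 * x > 0" using x by auto
  have inner: "(LINT s2:{0..}|lborel. exp (- 3 * s1) * exp (- s2) *
      (T A B C D (EE x (la + lab + s1)) (EE x (lb + lab + s1)) (EE x s2) (EE x (lc + s1 + s2))
     + T B A C D (EE x (la + lab + s1)) (EE x (lc + s1)) (EE x s2) (EE x (lb + lab + s1 + s2))
     + T C A B D (EE x (lb + lab + s1)) (EE x (lc + s1)) (EE x s2) (EE x (la + lab + s1 + s2))))
     = (exp (- s1)^3*(3/64 + 1/16*S*EE x s1^2)) * (1 / (real 1 + real 0 * x))
       + (exp (- s1)^3*(1/8*S*EE x s1^2 + 3/4*D*a*b*c*l^2*EE x s1^3)) * (1 / (real 1 + real 2 * x))" for s1
  proof (rule HB_LINT, rule HB_cong)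
    fix s2
    show "exp (- 3 * s1) * exp (- s2) *
      (T A B C D (EE x (la + lab + s1)) (EE x (lb + lab + s1)) (EE x s2) (EE x (lc + s1 + s2))
     + T B A C D (EE x (la + lab + s1)) (EE x (lc + s1)) (EE x s2) (EE x (lb + lab + s1 + s2))
     + T C A B D (EE x (lb + lab + s1)) (EE x (lc + s1)) (EE x s2) (EE x (la + lab + s1 + s2)))
       = (exp (- s1)^3*(3/64 + 1/16*S*EE x s1^2)) * (exp (- s2) ^ 1 * EE x s2 ^ 0)
       + (exp (- s1)^3*(1/8*S*EE x s1^2 + 3/4*D*a*b*c*l^2*EE x s1^3)) * (exp (- s2) ^ 1 * EE x s2 ^ 2)"
      unfolding T_def EE_add a_b_c_l_def S_def exp3
      by (simp add: algebra_simps power2_eq_square power3_eq_cube)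
  next
    show "HB {0..} (\<lambda>s2. (exp (- s1)^3*(3/64 + 1/16*S*EE x s1^2)) * (exp (- s2) ^ 1 * EE x s2 ^ 0)
       + (exp (- s1)^3*(1/8*S*EE x s1^2 + 3/4*D*a*b*c*l^2*EE x s1^3)) * (exp (- s2) ^ 1 * EE x s2 ^ 2))
      ((exp (- s1)^3*(3/64 + 1/16*S*EE x s1^2)) * (1 / (real 1 + real 0 * x))
       + (exp (- s1)^3*(1/8*S*EE x s1^2 + 3/4*D*a*b*c*l^2*EE x s1^3)) * (1 / (real 1 + real 2 * x)))"
      by (intro HB_add HB_cmult HB_pow_inf p1)
  qed simp
  have outer: "HB {0..} (\<lambda>s1. (exp (- s1)^3*(3/64 + 1/16*S*EE x s1^2)) * (1 / (real 1 + real 0 * x))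
       + (exp (- s1)^3*(1/8*S*EE x s1^2 + 3/4*D*a*b*c*l^2*EE x s1^3)) * (1 / (real 1 + real 2 * x)))
     (3/64 * (1 / (real 3 + real 0 * x)) + (1/16*S + 1/8*S/(1+2*x)) * (1 / (real 3 + real 2 * x))
       + (3/4*D*a*b*c*l^2/(1+2*x)) * (1 / (real 3 + real 3 * x)))"
  proof (rule HB_cong)
    fix s1
    show "(exp (- s1)^3*(3/64 + 1/16*S*EE x s1^2)) * (1 / (real 1 + real 0 * x))
       + (exp (- s1)^3*(1/8*S*EE x s1^2 + 3/4*D*a*b*c*l^2*EE x s1^3)) * (1 / (real 1 + real 2 * x))
      = 3/64 * (exp (- s1)^3 * EE x s1^0) + (1/16*S + 1/8*S/(1+2*x)) * (exp (- s1)^3 * EE x s1^2)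
       + (3/4*D*a*b*c*l^2/(1+2*x)) * (exp (- s1)^3 * EE x s1^3)"
    proof -
      define K where "K = 1/(1+2*x)"
      have e: "1 / (real 1 + real 2 * x) = K" "\<And>P. P/(1+2*x) = P*K" by (auto simp: K_def)
      show ?thesis unfolding e by (simp add: algebra_simps)
    qed
  next
    show "HB {0..} (\<lambda>s1. 3/64 * (exp (- s1)^3 * EE x s1^0) + (1/16*S + 1/8*S/(1+2*x)) * (exp (- s1)^3 * EE x s1^2)
       + (3/4*D*a*b*c*l^2/(1+2*x)) * (exp (- s1)^3 * EE x s1^3))
     (3/64 * (1 / (real 3 + real 0 * x)) + (1/16*S + 1/8*S/(1+2*x)) * (1 / (real 3 + real 2 * x))
       + (3/4*D*a*b*c*l^2/(1+2*x)) * (1 / (real 3 + real 3 * x)))"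
      by (intro HB_add HB_cmult HB_pow_inf p1)
  qed simp
  show ?thesis
    unfolding inner using HB_LINT[OF outer]
    by (simp add: a_b_c_l_def S_def)
qed


definition Phi :: "real \<Rightarrow> real \<Rightarrow> real \<Rightarrow> real \<Rightarrow> real \<Rightarrow> real \<Rightarrow> real \<Rightarrow> real \<Rightarrow> real \<Rightarrow> real" where
  "Phi x la lb lab lc A B C D =
    (1/64*(1 - exp (- lab)) + 1/16*A*EE x la*EE x lb*((1 - exp (- lab)*EE x lab^2)/(1+2*x))
      + 1/16*(B*EE x la+C*EE x lb)*EE x lab*EE x lc/(1+2*x)*(1 - exp (- lab))
      + 1/4*D*EE x la*EE x lb*EE x lab*EE x lc/(1+2*x)*((1 - exp (- lab)*EE x lab)/(1+x)))
   + exp (- lab) * (1/64 + (1/16*(A*EE x la*EE x lb*EE x lab^2 + B*EE x la*EE x lc*EE x lab + C*EE x lb*EE x lc*EE x lab)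
              + 1/8*(A*EE x la*EE x lb*EE x lab^2 + B*EE x la*EE x lc*EE x lab + C*EE x lb*EE x lc*EE x lab)/(1+2*x))/(3+2*x)
      + 3/4*D*EE x la*EE x lb*EE x lc*EE x lab^2/(1+2*x)/(3+3*x))"

lemma ck_closed:
  assumes q: "q > 0" and mu: "mu > 0" and L: "lab \<ge> 0"
    and hi: "i < 4" and hj: "j < 4" and hk: "k < 4"
  shows "ck q mu la lb lab lc i j k = Phi (4*q*mu) la lb lab lc (gg i j) (gg i k) (gg j k) (G3 i j k)"
proof -
  have x: "4*q*mu > 0" using q mu by simp
  show ?thesis
    unfolding ck_def tree3_T[OF hi hj hk] tree3_T[OF hi hk hj] tree3_T[OF hj hk hi]
      gg_sym[of k j] gg_sym[of j i] gg_sym[of k i] G3_sym2[of i k j] G3_sym3[of j k i]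
      I1[OF x L] I2[OF x] Phi_def ..
qed

lemma Phi_swap:
  assumes x: "x > 0" and e: "la = lab + lc"
  shows "Phi x la lb lab lc A B C D = Phi x la lb lab lc C B A D"
proof -
  have a: "EE x la = EE x lab * EE x lc" using e by (simp add: EE_add)
  have d: "1 + 2*x \<noteq> 0" "3 + 2*x \<noteq> 0" "1 + x \<noteq> 0" "3 + 3*x \<noteq> 0" using x by auto
  have r: "(1/16*S + 1/8*S/(1+2*x))/(3+2*x) = S/(16*(1+2*x))" for S
  proof -
    have h: "1/16*S + 1/8*S/(1+2*x) = S*(3+2*x)/(16*(1+2*x))" using d by (simp add: field_simps)
    have pp: "(3+2*x) > 0" "1 + 2*x > 0" using x by auto
    show ?thesis unfolding h using pp by simp
  qed
  define K K3 K4 where "K = 1/(1+2*x)" "K3 = 1/(1+x)" "K4 = 1/(3+3*x)"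
  have e: "\<And>P. P/(1+2*x) = P*K" "\<And>P. P/(16*(1+2*x)) = P*K/16" "\<And>P. P/(1+x) = P*K3"
     "\<And>P. P/(3+3*x) = P*K4" by (auto simp: K_K3_K4_def)
  show ?thesis unfolding Phi_def r unfolding a e by (simp add: field_simps)
qed


theorem propositionA1:
  fixes q mu la lb lab lc :: real
  assumes "q > 0" and "mu > 0"
    and "la \<ge> 0" and "lb \<ge> 0" and "lab \<ge> 0" and "lc \<ge> 0"
    and "la = lab + lc"
  shows "\<forall>i<4. \<forall>j<4. \<forall>k<4. ck q mu la lb lab lc i j k = ck q mu la lb lab lc k j i"
proof (intro allI impI)
  fix i j k :: nat
  assume hi: "i < 4" and hj: "j < 4" and hk: "k < 4"
  have x: "4*q*mu > 0" using assms(1,2) by simp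
  have "ck q mu la lb lab lc i j k = Phi (4*q*mu) la lb lab lc (gg i j) (gg i k) (gg j k) (G3 i j k)"
    by (rule ck_closed[OF assms(1,2,5) hi hj hk])
  also have "\<dots> = Phi (4*q*mu) la lb lab lc (gg j k) (gg i k) (gg i j) (G3 i j k)"
    by (rule Phi_swap[OF x assms(7)])
  also have "\<dots> = Phi (4*q*mu) la lb lab lc (gg k j) (gg k i) (gg j i) (G3 k j i)"
    by (simp add: gg_sym[of k j] gg_sym[of k i] gg_sym[of j i] G3_sym1[of i j k])
  also have "\<dots> = ck q mu la lb lab lc k j i"
    by (rule ck_closed[OF assms(1,2,5) hk hj hi, symmetric])
  finally show "ck q mu la lb lab lc i j k = ck q mu la lb lab lc k j i" .
qed

end
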